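(* Let $M$ be a finite monoid in $\mathbf{DG}$, $X,Y\in\Lambda(M)$ with idempotent generators $e_X,e_Y$. Then $m\in\mathrm{Irr}_{\mathscr K(M)}(e_X,e_Y)$ if and only if: (1) $e_X=e_R(m)$; (2) $e_Y=e_L(m)$; (3) $m\notin\nabla Y\nabla X$; (4) $m$ is a null element.
   Context: $E(M)$ idempotents. $M$ is rectangular if each $\{f\in E(M):MfM=MeM\}$ is closed under multiplication; $M\in\mathbf{DG}$ if it is rectangular and $MeM=MfM$ implies $e=f$ for idempotents. $\Lambda(M)$ is the set of ideals $MeM$, $e\in E(M)$. $\nabla X=\{m: X\not\subseteq MmM\}$, $\nabla Y\nabla X=\{ab: a\in\nabla Y, b\in\nabla X\}$. $\mathrm{St}_L(m)=\{n:nm=m\}$, $\mathrm{St}_R(m)=\{n: mn=m\}$ are submonoids in $\mathbf{DG}$; $e_L(m)$, $e_R(m)$ denote the unique idempotent in the minimal ideal of $\mathrm{St}_L(m)$, $\mathrm{St}_R(m)$ respectively. $m$ is null if $m\notin mMm$. $\mathscr K(M)$: objects $E(M)$, morphisms $e\to f$ elements of $fMe$, composition the product; a morphism is irreducible if it is neither a split mono nor a split epi and whenever it factors as $gh$, $h$ is a split mono or $g$ a split epi; $\mathrm{Irr}_{\mathscr K(M)}(e,f)$ is the set of these. *)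

theory Defs
  imports Main
begin

text \<open>The monoid M is the whole type 'a of class monoid_mult (finite: class finite).\<close>

definition idems :: "'a itself \<Rightarrow> 'a::monoid_mult set" where
  "idems _ = {e. e * e = e}"

definition pideal :: "'a::monoid_mult \<Rightarrow> 'a set" where
  "pideal m = {a * m * b | a b. True}"

definition rectangular :: "'a::monoid_mult itself \<Rightarrow> bool" where
  "rectangular T \<longleftrightarrow> (\<forall>e \<in> idems T. \<forall>f \<in> idems T. \<forall>g \<in> idems T.
      pideal f = pideal e \<longrightarrow> pideal g = pideal e \<longrightarrow> pideal (f * g) = pideal e \<and> f * g \<in> idems T)"

definition DG :: "'a::monoid_mult itself \<Rightarrow> bool" where
  "DG T \<longleftrightarrow> rectangular T \<and>
     (\<forall>e \<in> idems T. \<forall>f \<in> idems T. pideal e = pideal f \<longrightarrow> e = f)"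

definition Lambda :: "'a::monoid_mult itself \<Rightarrow> 'a set set" where
  "Lambda T = {pideal e | e. e \<in> idems T}"

definition nabla :: "'a::monoid_mult set \<Rightarrow> 'a set" where
  "nabla X = {m. \<not> X \<subseteq> pideal m}"

definition setprod :: "'a::monoid_mult set \<Rightarrow> 'a set \<Rightarrow> 'a set" where
  "setprod A B = {a * b | a b. a \<in> A \<and> b \<in> B}"

definition StL :: "'a::monoid_mult \<Rightarrow> 'a set" where
  "StL m = {n. n * m = m}"

definition StR :: "'a::monoid_mult \<Rightarrow> 'a set" where
  "StR m = {n. m * n = m}"

definition is_ideal_of :: "'a::monoid_mult set \<Rightarrow> 'a set \<Rightarrow> bool" where
  "is_ideal_of I S \<longleftrightarrow> I \<subseteq> S \<and> I \<noteq> {} \<and> (\<forall>s \<in> S. \<forall>x \<in> I. s * x \<in> I \<and> x * s \<in> I)"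

definition min_ideal :: "'a::monoid_mult set \<Rightarrow> 'a set" where
  "min_ideal S = \<Inter>{I. is_ideal_of I S}"

definition eL :: "'a::monoid_mult \<Rightarrow> 'a" where
  "eL m = (THE e. e * e = e \<and> e \<in> min_ideal (StL m))"

definition eR :: "'a::monoid_mult \<Rightarrow> 'a" where
  "eR m = (THE e. e * e = e \<and> e \<in> min_ideal (StR m))"

definition null :: "'a::monoid_mult \<Rightarrow> bool" where
  "null m \<longleftrightarrow> m \<notin> {m * a * m | a. True}"

text \<open>Category K(M): morphisms e \<rightarrow> f are elements of fMe.\<close>
definition hom :: "'a::monoid_mult \<Rightarrow> 'a \<Rightarrow> 'a set" where
  "hom e f = {f * a * e | a. True}"

definition split_mono :: "'a::monoid_mult \<Rightarrow> 'a \<Rightarrow> 'a \<Rightarrow> bool" where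
  "split_mono e f h \<longleftrightarrow> h \<in> hom e f \<and> (\<exists>g \<in> hom f e. g * h = e)"

definition split_epi :: "'a::monoid_mult \<Rightarrow> 'a \<Rightarrow> 'a \<Rightarrow> bool" where
  "split_epi e f h \<longleftrightarrow> h \<in> hom e f \<and> (\<exists>g \<in> hom f e. h * g = f)"

definition Irr :: "'a::monoid_mult \<Rightarrow> 'a \<Rightarrow> 'a set" where
  "Irr e f = {m. m \<in> hom e f \<and> \<not> split_mono e f m \<and> \<not> split_epi e f m \<and>
     (\<forall>c \<in> idems TYPE('a). \<forall>h \<in> hom e c. \<forall>g \<in> hom c f.
        m = g * h \<longrightarrow> split_mono e c h \<or> split_epi c f g)}"

end

theory Submission
  imports Defs
begin

lemma pow_idem:
  fixes x :: "'a::{monoid_mult,finite}"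
  shows "\<exists>k\<ge>1. x^k * x^k = x^k"
proof -
  define f where "f = (\<lambda>n::nat. x^(Suc n))"
  have "\<not> inj f"
  proof
    assume "inj f"
    hence "finite (UNIV::nat set)"
      using finite_imageD[of f UNIV] by (metis finite_UNIV finite_subset subset_UNIV)
    thus False by simp
  qed
  then obtain a b where "a \<noteq> b" "f a = f b" unfolding inj_def by blast
  then obtain a b where ab: "a < b" "x^(Suc a) = x^(Suc b)"
    by (metis f_def linorder_neq_iff)
  define i where "i = Suc a"
  define p where "p = b - a"
  have p: "p \<ge> 1" and ip: "x^i = x^(i+p)" using ab by (auto simp: i_def p_def)
  have step: "x^(i+r+p) = x^(i+r)" for r
  proof -
    have "x^(i+r+p) = x^(i+p)*x^r" by (simp add: power_add[symmetric] ac_simps)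
    also have "\<dots> = x^i * x^r" using ip by simp
    also have "\<dots> = x^(i+r)" by (simp add: power_add)
    finally show ?thesis .
  qed
  have per: "x^(i+r+p*t) = x^(i+r)" for r t
  proof (induction t)
    case 0 then show ?case by simp
  next
    case (Suc t)
    have e: "i+r+p*Suc t = i+(r+p*t)+p" by simp
    have "x^(i+r+p*Suc t) = x^(i+(r+p*t))" unfolding e by (rule step)
    also have "\<dots> = x^(i+r+p*t)" by (simp add: add.assoc)
    finally show ?case using Suc.IH by simp
  qed
  define n where "n = i*p"
  have ni: "n \<ge> i" using p by (simp add: n_def)
  have "n + n = i + (n-i) + p*i" using ni by (simp add: n_def)
  hence "x^n * x^n = x^(i + (n-i) + p*i)" by (simp add: power_add[symmetric])
  also have "\<dots> = x^(i+(n-i))" by (rule per)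
  also have "\<dots> = x^n" using ni by simp
  finally show ?thesis using ni by (intro exI[of _ n]) (simp add: i_def)
qed

lemma hom_iff:
  assumes "e*e = e" "f*f = f"
  shows "x \<in> hom e f \<longleftrightarrow> f*x = x \<and> x*e = x"
proof
  assume "x \<in> hom e f"
  then obtain a where "x = f*a*e" by (auto simp: hom_def)
  then show "f*x = x \<and> x*e = x" using assms by (metis mult.assoc)
next
  assume "f*x = x \<and> x*e = x"
  then have "x = f*x*e" by simp
  then show "x \<in> hom e f" by (auto simp: hom_def)
qed

lemma idems_iff: "e \<in> idems T \<longleftrightarrow> e*e = e" by (simp add: idems_def)

lemma pideal_mem: "a*y*b \<in> pideal y" by (auto simp: pideal_def)

lemma pideal_self: "y \<in> pideal y" using pideal_mem[of 1 y 1] by simp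

lemma pideal_trans: "x \<in> pideal y \<Longrightarrow> pideal x \<subseteq> pideal y"
proof
  fix z assume x: "x \<in> pideal y" and z: "z \<in> pideal x"
  from x obtain a b where "x = a*y*b" by (auto simp: pideal_def)
  moreover from z obtain c d where "z = c*x*d" by (auto simp: pideal_def)
  ultimately have "z = (c*a)*y*(b*d)" by (simp add: mult.assoc)
  thus "z \<in> pideal y" by (rule ssubst) (rule pideal_mem)
qed

lemma DG_eq:
  assumes "DG TYPE('a::monoid_mult)" "(e::'a)*e = e" "f*f = f" "e \<in> pideal f" "f \<in> pideal e"
  shows "e = f"
proof -
  have "pideal e = pideal f" using pideal_trans assms(4,5) by blast
  thus ?thesis using assms(1-3) unfolding DG_def idems_def by blast
qed

lemma left_pow: "a*y = y \<Longrightarrow> k \<ge> 1 \<Longrightarrow> a*y^k = (y::'a::monoid_mult)^k"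
  by (cases k) (auto simp: mult.assoc[symmetric])

lemma right_pow: "y*a = y \<Longrightarrow> k \<ge> 1 \<Longrightarrow> (y::'a::monoid_mult)^k*a = y^k"
proof -
  assume a: "y*a = y" "k \<ge> 1"
  then obtain n where k: "k = Suc n" by (cases k) auto
  have "y^k*a = y^n*(y*a)" unfolding k power_Suc2 by (simp add: mult.assoc)
  thus ?thesis using a k by (simp only: power_Suc2)
qed

lemma ideal_pow:
  assumes "is_ideal_of I S" "y \<in> I" "k \<ge> 1"
  shows "y^k \<in> I"
proof -
  have "y^Suc n \<in> I" for n
  proof (induction n)
    case 0 then show ?case using assms by simp
  next
    case (Suc n)
    have "y \<in> S" using assms unfolding is_ideal_of_def by blast
    then show ?case using Suc assms(1) unfolding is_ideal_of_def by simp
  qed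
  thus ?thesis using assms(3) by (cases k) auto
qed

lemma min_ideal_props:
  fixes S :: "'a::{monoid_mult,finite} set"
  assumes "1 \<in> S" "\<And>x y. x\<in>S \<Longrightarrow> y\<in>S \<Longrightarrow> x*y \<in> S"
  shows "is_ideal_of (min_ideal S) S"
proof -
  have ex: "is_ideal_of S S" using assms by (auto simp: is_ideal_of_def)
  obtain I where I: "is_ideal_of I S" and Imin: "\<And>J. is_ideal_of J S \<Longrightarrow> card I \<le> card J"
    using ex_has_least_nat[of "\<lambda>I. is_ideal_of I S" S card] ex by blast
  have sub: "I \<subseteq> J" if J: "is_ideal_of J S" for J
  proof -
    obtain i where i: "i \<in> I" using I by (auto simp: is_ideal_of_def)
    obtain j where j: "j \<in> J" using J by (auto simp: is_ideal_of_def)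
    have "i \<in> S" "j \<in> S" using I J i j by (auto simp: is_ideal_of_def)
    hence "i*j \<in> I \<inter> J" using I J i j by (auto simp: is_ideal_of_def)
    hence "is_ideal_of (I \<inter> J) S" using I J by (auto simp: is_ideal_of_def)
    hence "card I \<le> card (I\<inter>J)" by (rule Imin)
    moreover have "finite I" by simp
    ultimately have "I \<inter> J = I" using card_seteq[of I "I\<inter>J"] by auto
    thus ?thesis by blast
  qed
  have "min_ideal S = I" unfolding min_ideal_def using I sub by blast
  thus ?thesis using I by simp
qed

lemma min_ideal_uniq:
  fixes S :: "'a::{monoid_mult,finite} set"
  assumes DG: "DG TYPE('a)" and S: "1 \<in> S" "\<And>x y. x\<in>S \<Longrightarrow> y\<in>S \<Longrightarrow> x*y \<in> S"
  shows "\<exists>!e. e*e = e \<and> e \<in> min_ideal S"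
proof -
  let ?I = "min_ideal S"
  have I: "is_ideal_of ?I S" by (rule min_ideal_props[OF S])
  have Imin: "?I \<subseteq> J" if "is_ideal_of J S" for J unfolding min_ideal_def using that by blast
  have inpi: "f \<in> pideal e" if e: "e \<in> ?I" and f: "f \<in> ?I" for e f
  proof -
    have eS: "e \<in> S" using e I by (auto simp: is_ideal_of_def)
    let ?J = "{a*e*b | a b. a \<in> S \<and> b \<in> S}"
    have "is_ideal_of ?J S"
      unfolding is_ideal_of_def
    proof (intro conjI ballI)
      show "?J \<subseteq> S" using eS S by auto
      show "?J \<noteq> {}" using S(1) by blast
    next
      fix s x assume s: "s \<in> S" and x: "x \<in> ?J"
      then obtain a b where ab: "x = a*e*b" "a \<in> S" "b \<in> S" by blast
      have "s*x = (s*a)*e*b" "x*s = a*e*(b*s)" using ab by (simp_all add: mult.assoc)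
      moreover have "s*a \<in> S" "b*s \<in> S" using ab s S by auto
      ultimately show "s*x \<in> ?J" "x*s \<in> ?J" using ab by auto
    qed
    hence "f \<in> ?J" using Imin f by blast
    thus ?thesis using pideal_mem by blast
  qed
  obtain i where i: "i \<in> ?I" using I by (auto simp: is_ideal_of_def)
  obtain k where k: "k\<ge>1" "i^k*i^k = i^k" using pow_idem by blast
  have "i^k \<in> ?I" using ideal_pow[OF I i k(1)] .
  moreover have "e = f" if "e*e = e" "e \<in> ?I" "f*f = f" "f \<in> ?I" for e f
    using DG_eq[OF DG] that inpi by blast
  ultimately show ?thesis using k by blast
qed

lemma StR_sub: "1 \<in> StR m" "x \<in> StR m \<Longrightarrow> y \<in> StR m \<Longrightarrow> x*y \<in> StR m"
  by (auto simp: StR_def mult.assoc[symmetric])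

lemma StL_sub: "1 \<in> StL m" "x \<in> StL m \<Longrightarrow> y \<in> StL m \<Longrightarrow> x*y \<in> StL m"
  by (auto simp: StL_def mult.assoc)

lemma eR_props:
  fixes m :: "'a::{monoid_mult,finite}"
  assumes "DG TYPE('a)"
  shows "eR m * eR m = eR m" "eR m \<in> min_ideal (StR m)"
    "\<And>f. f*f = f \<Longrightarrow> f \<in> min_ideal (StR m) \<Longrightarrow> f = eR m"
    "is_ideal_of (min_ideal (StR m)) (StR m)"
proof -
  have u: "\<exists>!e. e*e = e \<and> e \<in> min_ideal (StR m)"
    by (rule min_ideal_uniq[OF assms]) (auto intro: StR_sub)
  show "eR m * eR m = eR m" "eR m \<in> min_ideal (StR m)"
    using theI'[OF u] unfolding eR_def by auto
  show "\<And>f. f*f = f \<Longrightarrow> f \<in> min_ideal (StR m) \<Longrightarrow> f = eR m"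
    unfolding eR_def using the1_equality[OF u] by auto
  show "is_ideal_of (min_ideal (StR m)) (StR m)"
    by (rule min_ideal_props) (auto intro: StR_sub)
qed

lemma eL_props:
  fixes m :: "'a::{monoid_mult,finite}"
  assumes "DG TYPE('a)"
  shows "eL m * eL m = eL m" "eL m \<in> min_ideal (StL m)"
    "\<And>f. f*f = f \<Longrightarrow> f \<in> min_ideal (StL m) \<Longrightarrow> f = eL m"
    "is_ideal_of (min_ideal (StL m)) (StL m)"
proof -
  have u: "\<exists>!e. e*e = e \<and> e \<in> min_ideal (StL m)"
    by (rule min_ideal_uniq[OF assms]) (auto intro: StL_sub)
  show "eL m * eL m = eL m" "eL m \<in> min_ideal (StL m)"
    using theI'[OF u] unfolding eL_def by auto
  show "\<And>f. f*f = f \<Longrightarrow> f \<in> min_ideal (StL m) \<Longrightarrow> f = eL m"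
    unfolding eL_def using the1_equality[OF u] by auto
  show "is_ideal_of (min_ideal (StL m)) (StL m)"
    by (rule min_ideal_props) (auto intro: StL_sub)
qed

lemma stab_pow: "(m::'a::monoid_mult)*z = m \<Longrightarrow> m*z^n = m"
  by (induction n) (simp_all add: mult.assoc[symmetric])

lemma hom_in: "e*e = e \<Longrightarrow> f*f = f \<Longrightarrow> f*x = x \<Longrightarrow> x*e = x \<Longrightarrow> x \<in> hom e f"
  using hom_iff by blast

lemma hom_L: "e*e = e \<Longrightarrow> f*f = f \<Longrightarrow> x \<in> hom e f \<Longrightarrow> f*x = x"
  using hom_iff by blast

lemma hom_R: "e*e = e \<Longrightarrow> f*f = f \<Longrightarrow> x \<in> hom e f \<Longrightarrow> x*e = x"
  using hom_iff by blast

lemma idem_left: "(e::'a::monoid_mult)*e = e \<Longrightarrow> e*(e*z) = e*z"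
  by (metis mult.assoc)

lemma iter_left:
  fixes eX u h v :: "'a::monoid_mult"
  assumes "eX = (u*h)*eX*v"
  shows "eX = (u*h)^n*eX*v^n"
proof (induction n)
  case 0 then show ?case by simp
next
  case (Suc n)
  have "eX = (u*h)^n*((u*h)*eX*v)*v^n" using Suc assms by simp
  also have "\<dots> = (u*h)^Suc n*eX*v^Suc n" by (simp only: power_Suc2[of "u*h" n] power_Suc[of v n] mult.assoc)
  finally show ?case .
qed

lemma iter_right:
  fixes eY u g v :: "'a::monoid_mult"
  assumes "eY = u*eY*(g*v)"
  shows "eY = u^n*eY*(g*v)^n"
proof (induction n)
  case 0 then show ?case by simp
next
  case (Suc n)
  have "eY = u^n*(u*eY*(g*v))*(g*v)^n" using Suc assms by simp
  also have "\<dots> = u^Suc n*eY*(g*v)^Suc n" by (simp only: power_Suc2[of u n] power_Suc[of "g*v" n] mult.assoc)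
  finally show ?case .
qed

lemma split_mono_from_ideal:
  fixes eX c h :: "'a::{monoid_mult,finite}"
  assumes eX: "eX*eX = eX" and c: "c*c = c" and h: "h \<in> hom eX c" and mem: "eX \<in> pideal h"
  shows "split_mono eX c h"
proof -
  have hR: "h*eX = h" and hL: "c*h = h" using hom_iff[OF eX c] h by auto
  obtain u v where uv: "eX = u*h*v" using mem by (auto simp: pideal_def)
  have "eX = (u*h)*eX*v" using uv hR by (simp add: mult.assoc)
  note it = iter_left[OF this]
  obtain k where k: "k\<ge>1" "(u*h)^k*(u*h)^k = (u*h)^k" using pow_idem by blast
  obtain j where j: "k = Suc j" using k by (cases k) auto
  have "(u*h)^k*eX = (u*h)^k*((u*h)^k*eX*v^k)" using it[of k] by simp
  also have "\<dots> = ((u*h)^k*(u*h)^k)*eX*v^k" by (simp add: mult.assoc)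
  also have "\<dots> = eX" using k it[of k] by simp
  finally have e1: "(u*h)^k*eX = eX" .
  have "(u*h)^k*eX = ((u*h)^j*u)*(h*eX)" unfolding j power_Suc2 by (simp add: mult.assoc)
  hence w: "eX = ((u*h)^j*u)*h" using e1 hR by simp
  define G where "G = eX*((u*h)^j*u)*c"
  have "G \<in> hom c eX" unfolding G_def hom_def by blast
  moreover have "G*h = eX"
  proof -
    have "G*h = eX*((u*h)^j*u)*(c*h)" unfolding G_def by (simp add: mult.assoc)
    also have "\<dots> = eX*(((u*h)^j*u)*h)" using hL by (simp add: mult.assoc)
    also have "\<dots> = eX" using w eX by simp
    finally show ?thesis .
  qed
  ultimately show ?thesis using h unfolding split_mono_def by blast
qed

lemma split_epi_from_ideal:
  fixes eY c g :: "'a::{monoid_mult,finite}"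
  assumes eY: "eY*eY = eY" and c: "c*c = c" and g: "g \<in> hom c eY" and mem: "eY \<in> pideal g"
  shows "split_epi c eY g"
proof -
  have gR: "g*c = g" and gL: "eY*g = g" using hom_iff[OF c eY] g by auto
  obtain u v where uv: "eY = u*g*v" using mem by (auto simp: pideal_def)
  have "eY = u*(eY*g)*v" by (metis gL uv)
  hence "eY = u*eY*(g*v)" by (simp only: mult.assoc)
  note it = iter_right[OF this]
  obtain k where k: "k\<ge>1" "(g*v)^k*(g*v)^k = (g*v)^k" using pow_idem by blast
  obtain j where j: "k = Suc j" using k by (cases k) auto
  have "eY*(g*v)^k = (u^k*eY*(g*v)^k)*(g*v)^k" using it[of k] by simp
  also have "\<dots> = u^k*eY*((g*v)^k*(g*v)^k)" by (simp add: mult.assoc)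
  also have "\<dots> = eY" using k it[of k] by simp
  finally have e1: "eY*(g*v)^k = eY" .
  have "eY*(g*v)^k = (eY*g)*(v*(g*v)^j)" unfolding j power_Suc by (simp add: mult.assoc)
  hence w: "eY = g*(v*(g*v)^j)" using e1 gL by simp
  define G where "G = c*(v*(g*v)^j)*eY"
  have "G \<in> hom eY c" unfolding G_def hom_def by blast
  moreover have "g*G = eY"
  proof -
    have "g*G = (g*c)*(v*(g*v)^j)*eY" unfolding G_def by (simp add: mult.assoc)
    also have "\<dots> = (g*(v*(g*v)^j))*eY" using gR by (simp add: mult.assoc)
    also have "\<dots> = eY" using w eY by simp
    finally show ?thesis .
  qed
  ultimately show ?thesis using g unfolding split_epi_def by blast
qed

theorem mainTheorem19:
  fixes X Y :: "'a::{monoid_mult, finite} set" and eX eY m :: 'a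
  assumes "DG TYPE('a)"
    and "X \<in> Lambda TYPE('a)" and "Y \<in> Lambda TYPE('a)"
    and "eX \<in> idems TYPE('a)" and "X = pideal eX"
    and "eY \<in> idems TYPE('a)" and "Y = pideal eY"
  shows "m \<in> Irr eX eY \<longleftrightarrow>
    (eX = eR m \<and> eY = eL m \<and> m \<notin> setprod (nabla Y) (nabla X) \<and> null m)"
proof -
  note DG = assms(1)
  have eXi: "eX*eX = eX" and eYi: "eY*eY = eY" using assms(4,6) by (auto simp: idems_def)
  have one: "(1::'a) \<in> idems TYPE('a)" by (simp add: idems_def)
  show ?thesis
  proof
    assume irr: "m \<in> Irr eX eY"
    from irr have mh: "m \<in> hom eX eY" and nsm: "\<not> split_mono eX eY m" and nse: "\<not> split_epi eX eY m"
      and fac: "\<And>c h g. c \<in> idems TYPE('a) \<Longrightarrow> h \<in> hom eX c \<Longrightarrow> g \<in> hom c eY \<Longrightarrow> m = g*h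
                  \<Longrightarrow> split_mono eX c h \<or> split_epi c eY g"
      unfolding Irr_def mem_Collect_eq by auto
    have mL: "eY*m = m" and mR: "m*eX = m" using hom_iff[OF eXi eYi] mh by auto
    have c1: "eX = eR m"
    proof -
      define f where "f = eR m"
      note P = eR_props[OF DG, where m=m]
      have ff: "f*f = f" and fI: "f \<in> min_ideal (StR m)" using P(1,2) unfolding f_def by auto
      have funi: "\<And>g. g*g = g \<Longrightarrow> g \<in> min_ideal (StR m) \<Longrightarrow> g = f" unfolding f_def using P(3) by blast
      have I: "is_ideal_of (min_ideal (StR m)) (StR m)" using P(4) by simp
      have eXS: "eX \<in> StR m" using mR by (simp add: StR_def)
      have "f \<in> StR m" using I fI unfolding is_ideal_of_def by blast
      hence mf: "m*f = m" by (simp add: StR_def)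
      define y where "y = eX*f*eX"
      have "eX*f \<in> min_ideal (StR m)" using I fI eXS unfolding is_ideal_of_def by blast
      hence yI: "y \<in> min_ideal (StR m)" using I eXS unfolding is_ideal_of_def y_def by blast
      obtain k where k: "k\<ge>1" "y^k*y^k = y^k" using pow_idem by blast
      have yk: "y^k = f" using funi k ideal_pow[OF I yI k(1)] by blast
      have ly: "eX*y = y" and ry: "y*eX = y" unfolding y_def using eXi by (simp_all add: mult.assoc idem_left)
      have feX: "eX*f = f" "f*eX = f" using left_pow[OF ly k(1)] right_pow[OF ry k(1)] yk by simp_all
      have fid: "f \<in> idems TYPE('a)" using ff by (simp add: idems_def)
      have h: "f \<in> hom eX f" using hom_in[OF eXi ff] ff feX by simp
      have g: "m \<in> hom f eY" using hom_in[OF ff eYi] mL mf by simp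
      have "split_mono eX f f \<or> split_epi f eY m" using fac[OF fid h g] mf by simp
      thus ?thesis
      proof
        assume "split_mono eX f f"
        then obtain g' where "g'*f = eX" unfolding split_mono_def by blast
        hence "eX \<in> pideal f" using pideal_mem[of g' f 1] by simp
        moreover have "f \<in> pideal eX" using pideal_mem[of f eX 1] feX by simp
        ultimately show ?thesis using DG_eq[OF DG eXi ff] f_def by simp
      next
        assume "split_epi f eY m"
        then obtain g' where g': "g' \<in> hom eY f" "m*g' = eY" unfolding split_epi_def by blast
        have fg: "f*g' = g'" "g'*eY = g'" using hom_iff[OF eYi ff] g' by auto
        have "eX*g' = (eX*f)*g'" using fg by (simp add: mult.assoc)
        hence "eX*g' = g'" using feX fg by simp
        hence "g' \<in> hom eY eX" using hom_in[OF eYi eXi] \<open>g'*eY = g'\<close> by simp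
        hence "split_epi eX eY m" using mh g' unfolding split_epi_def by blast
        thus ?thesis using nse by simp
      qed
    qed
    have c2: "eY = eL m"
    proof -
      define f where "f = eL m"
      note P = eL_props[OF DG, where m=m]
      have ff: "f*f = f" and fI: "f \<in> min_ideal (StL m)" using P(1,2) unfolding f_def by auto
      have funi: "\<And>g. g*g = g \<Longrightarrow> g \<in> min_ideal (StL m) \<Longrightarrow> g = f" unfolding f_def using P(3) by blast
      have I: "is_ideal_of (min_ideal (StL m)) (StL m)" using P(4) by simp
      have eYS: "eY \<in> StL m" using mL by (simp add: StL_def)
      have "f \<in> StL m" using I fI unfolding is_ideal_of_def by blast
      hence mf: "f*m = m" by (simp add: StL_def)
      define y where "y = eY*f*eY"
      have "eY*f \<in> min_ideal (StL m)" using I fI eYS unfolding is_ideal_of_def by blast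
      hence yI: "y \<in> min_ideal (StL m)" using I eYS unfolding is_ideal_of_def y_def by blast
      obtain k where k: "k\<ge>1" "y^k*y^k = y^k" using pow_idem by blast
      have yk: "y^k = f" using funi k ideal_pow[OF I yI k(1)] by blast
      have ly: "eY*y = y" and ry: "y*eY = y" unfolding y_def using eYi by (simp_all add: mult.assoc idem_left)
      have feY: "eY*f = f" "f*eY = f" using left_pow[OF ly k(1)] right_pow[OF ry k(1)] yk by simp_all
      have fid: "f \<in> idems TYPE('a)" using ff by (simp add: idems_def)
      have h: "m \<in> hom eX f" using hom_in[OF eXi ff] mf mR by simp
      have g: "f \<in> hom f eY" using hom_in[OF ff eYi] ff feY by simp
      have "split_mono eX f m \<or> split_epi f eY f" using fac[OF fid h g] mf by simp
      thus ?thesis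
      proof
        assume "split_epi f eY f"
        then obtain g' where "f*g' = eY" unfolding split_epi_def by blast
        hence "eY \<in> pideal f" using pideal_mem[of 1 f g'] by simp
        moreover have "f \<in> pideal eY" using pideal_mem[of 1 eY f] feY by simp
        ultimately show ?thesis using DG_eq[OF DG eYi ff] f_def by simp
      next
        assume "split_mono eX f m"
        then obtain g' where g': "g' \<in> hom f eX" "g'*m = eX" unfolding split_mono_def by blast
        have fg: "eX*g' = g'" "g'*f = g'" using hom_iff[OF ff eXi] g' by auto
        have "g'*eY = g'*(f*eY)" using fg by (simp add: mult.assoc[symmetric])
        hence "g'*eY = g'" using feY fg by simp
        hence "g' \<in> hom eY eX" using hom_in[OF eYi eXi] \<open>eX*g' = g'\<close> by simp
        hence "split_mono eX eY m" using mh g' unfolding split_mono_def by blast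
        thus ?thesis using nsm by simp
      qed
    qed
    have c3: "m \<notin> setprod (nabla Y) (nabla X)"
    proof
      assume "m \<in> setprod (nabla Y) (nabla X)"
      then obtain a b where ab: "m = a*b" "a \<in> nabla Y" "b \<in> nabla X" unfolding setprod_def by blast
      define h where "h = b*eX"
      define g where "g = eY*a"
      have h: "h \<in> hom eX 1" using hom_in[of eX 1 h] eXi unfolding h_def by (simp add: mult.assoc)
      have g: "g \<in> hom 1 eY" using hom_in[of 1 eY g] eYi unfolding g_def by (simp add: mult.assoc[symmetric])
      have "g*h = eY*m*eX" unfolding g_def h_def ab(1) by (simp add: mult.assoc)
      hence "m = g*h" using mL mR by simp
      from fac[OF one h g this] show False
      proof
        assume "split_mono eX 1 h"
        then obtain g' where "g'*h = eX" unfolding split_mono_def by blast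
        hence "eX \<in> pideal b" using pideal_mem[of g' b eX] unfolding h_def by (simp add: mult.assoc)
        hence "X \<subseteq> pideal b" using pideal_trans assms(5) by blast
        thus False using ab(3) by (simp add: nabla_def)
      next
        assume "split_epi 1 eY g"
        then obtain g' where "g*g' = eY" unfolding split_epi_def by blast
        hence "eY \<in> pideal a" using pideal_mem[of eY a g'] unfolding g_def by (simp add: mult.assoc)
        hence "Y \<subseteq> pideal a" using pideal_trans assms(7) by blast
        thus False using ab(2) by (simp add: nabla_def)
      qed
    qed
    have c4: "null m"
    proof (rule ccontr)
      assume "\<not> null m"
      then obtain a where a: "m = m*a*m" unfolding null_def by blast
      define z where "z = a*m"
      obtain k where k: "k\<ge>1" "z^k*z^k = z^k" using pow_idem by blast
      obtain j where j: "k = Suc j" using k by (cases k) auto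
      define e where "e = z^k"
      have "m*z = m" using a unfolding z_def by (simp add: mult.assoc)
      hence me: "m*e = m" unfolding e_def by (rule stab_pow)
      have "z*eX = z" using mR unfolding z_def by (simp add: mult.assoc)
      hence eeX: "e*eX = e" unfolding e_def by (rule right_pow[OF _ k(1)])
      have ee: "e*e = e" using k e_def by simp
      have eid: "e \<in> idems TYPE('a)" using ee by (simp add: idems_def)
      have h: "e \<in> hom eX e" using hom_in[OF eXi ee] ee eeX by simp
      have g: "m \<in> hom e eY" using hom_in[OF ee eYi] mL me by simp
      from fac[OF eid h g] me have "split_mono eX e e \<or> split_epi e eY m" by simp
      thus False
      proof
        assume "split_mono eX e e"
        then obtain g' where g': "g' \<in> hom e eX" "g'*e = eX" unfolding split_mono_def by blast
        have g'L: "eX*g' = g'" using hom_iff[OF ee eXi] g' by auto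
        define G where "G = g'*z^j*a*eY"
        have "G \<in> hom eY eX"
        proof (rule hom_in[OF eYi eXi])
          show "eX*G = G" unfolding G_def using g'L by (simp add: mult.assoc[symmetric])
          show "G*eY = G" unfolding G_def using eYi by (simp add: mult.assoc)
        qed
        moreover have "G*m = eX"
        proof -
          have "G*m = g'*(z^j*(a*m))" unfolding G_def using mL by (simp add: mult.assoc)
          also have "\<dots> = g'*e" unfolding e_def j z_def by (simp only: power_Suc2)
          finally show ?thesis using g' by simp
        qed
        ultimately have "split_mono eX eY m" using mh unfolding split_mono_def by blast
        thus False using nsm by simp
      next
        assume "split_epi e eY m"
        then obtain g' where g': "g' \<in> hom eY e" "m*g' = eY" unfolding split_epi_def by blast
        have g'R: "g'*eY = g'" using hom_iff[OF eYi ee] g' by auto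
        define G where "G = eX*g'"
        have "G \<in> hom eY eX" using hom_in[OF eYi eXi] g'R eXi unfolding G_def
          by (simp add: mult.assoc idem_left)
        moreover have "m*G = eY" unfolding G_def using mR g' by (simp add: mult.assoc[symmetric])
        ultimately have "split_epi eX eY m" using mh unfolding split_epi_def by blast
        thus False using nse by simp
      qed
    qed
    show "eX = eR m \<and> eY = eL m \<and> m \<notin> setprod (nabla Y) (nabla X) \<and> null m"
      using c1 c2 c3 c4 by blast
  next
    assume rhs: "eX = eR m \<and> eY = eL m \<and> m \<notin> setprod (nabla Y) (nabla X) \<and> null m"
    have "eR m \<in> StR m" using eR_props(2,4)[OF DG, where m=m] unfolding is_ideal_of_def by blast
    hence mR: "m*eX = m" using rhs by (simp add: StR_def)
    have "eL m \<in> StL m" using eL_props(2,4)[OF DG, where m=m] unfolding is_ideal_of_def by blast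
    hence mL: "eY*m = m" using rhs by (simp add: StL_def)
    have mh: "m \<in> hom eX eY" using hom_in[OF eXi eYi] mL mR by simp
    have nl: "null m" using rhs by simp
    have nsm: "\<not> split_mono eX eY m"
    proof
      assume "split_mono eX eY m"
      then obtain g where "g*m = eX" unfolding split_mono_def by blast
      hence "m = m*g*m" using mR by (simp add: mult.assoc)
      thus False using nl unfolding null_def by blast
    qed
    have nse: "\<not> split_epi eX eY m"
    proof
      assume "split_epi eX eY m"
      then obtain g where "m*g = eY" unfolding split_epi_def by blast
      hence "m = m*g*m" using mL by simp
      thus False using nl unfolding null_def by blast
    qed
    have fac: "split_mono eX c h \<or> split_epi c eY g"
      if c: "c \<in> idems TYPE('a)" and h: "h \<in> hom eX c" and g: "g \<in> hom c eY" and mgh: "m = g*h"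
      for c h g
    proof -
      have cc: "c*c = c" using c by (simp add: idems_def)
      have "\<not> (g \<in> nabla Y \<and> h \<in> nabla X)" using rhs mgh unfolding setprod_def by blast
      hence "Y \<subseteq> pideal g \<or> X \<subseteq> pideal h" unfolding nabla_def by blast
      thus ?thesis
      proof
        assume "Y \<subseteq> pideal g"
        hence "eY \<in> pideal g" using assms(7) pideal_self by blast
        thus ?thesis using split_epi_from_ideal[OF eYi cc g] by simp
      next
        assume "X \<subseteq> pideal h"
        hence "eX \<in> pideal h" using assms(5) pideal_self by blast
        thus ?thesis using split_mono_from_ideal[OF eXi cc h] by simp
      qed
    qed
    show "m \<in> Irr eX eY" unfolding Irr_def using mh nsm nse fac by blast
  qed
qed

end
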